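(* Let $\Omega\subset\mathbb{R}^{n+1}$ be a compact convex body with $C^1$ boundary, let $\Theta\in[0,1)$, and let $r>0$ satisfy $\omega_\Omega(r)<\sqrt{2-2\Theta}$. Then for every $X_0\in\partial\Omega$, $$B^{n+1}_r(X_0)\cap\partial\Omega\subset\partial\Omega^+_\Theta(X_0),$$ and $$\{X\in\mathbb{R}^{n+1}\mid \langle X-X_0,-\mathcal{N}_\Omega(X_0)\rangle\ge\sqrt{1-\Theta^2}\,|X-X_0|\}\cap B^{n+1}_r(X_0)\subset\Omega.$$
   Context: $\mathcal{N}_\Omega(X)$ denotes the (unique) outward unit normal to $\Omega$ at $X\in\partial\Omega$. $\omega_\Omega(r):=\sup\{|\mathcal{N}_\Omega(X_1)-\mathcal{N}_\Omega(X_2)|: X_1,X_2\in\partial\Omega,\ |X_1-X_2|<r\}$. For $\Theta\ge0$ and $X_0\in\partial\Omega$, $\partial\Omega^+_\Theta(X_0):=\{X\in\partial\Omega\mid\langle\mathcal{N}_\Omega(X),\mathcal{N}_\Omega(X_0)\rangle>\Theta\}$. $B^{n+1}_r(X)$ is the open Euclidean ball. *)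

theory Defs
  imports "HOL-Analysis.Analysis"
begin

definition convex_body :: "'a::euclidean_space set \<Rightarrow> bool" where
  "convex_body \<Omega> \<longleftrightarrow> compact \<Omega> \<and> convex \<Omega> \<and> interior \<Omega> \<noteq> {}"

definition C1_boundary :: "'a::euclidean_space set \<Rightarrow> bool" where
  "C1_boundary \<Omega> \<longleftrightarrow>
     (\<forall>p\<in>frontier \<Omega>. \<exists>U g G. open U \<and> p \<in> U \<and>
        (\<forall>x\<in>U. (g has_derivative (\<lambda>h. G x \<bullet> h)) (at x)) \<and>
        continuous_on U G \<and> G p \<noteq> 0 \<and>
        \<Omega> \<inter> U = {x\<in>U. g x \<le> (0::real)})"

text \<open>Outward unit normal at a boundary point X: the (unique, for C^1 convex
  bodies) unit vector whose supporting half-space contains the body.\<close>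
definition outer_normal :: "'a::euclidean_space set \<Rightarrow> 'a \<Rightarrow> 'a" where
  "outer_normal \<Omega> X = (THE \<nu>. norm \<nu> = 1 \<and> (\<forall>Y\<in>\<Omega>. (Y - X) \<bullet> \<nu> \<le> 0))"

definition normal_modulus :: "'a::euclidean_space set \<Rightarrow> real \<Rightarrow> real" where
  "normal_modulus \<Omega> r = Sup {norm (outer_normal \<Omega> X1 - outer_normal \<Omega> X2) | X1 X2.
       X1 \<in> frontier \<Omega> \<and> X2 \<in> frontier \<Omega> \<and> dist X1 X2 < r}"

definition boundary_plus :: "'a::euclidean_space set \<Rightarrow> real \<Rightarrow> 'a \<Rightarrow> 'a set" where
  "boundary_plus \<Omega> \<Theta> X0 = {X\<in>frontier \<Omega>. outer_normal \<Omega> X \<bullet> outer_normal \<Omega> X0 > \<Theta>}"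

end

theory Submission imports Defs begin

lemma dir_deriv:
  fixes g :: "'a::euclidean_space \<Rightarrow> real"
  assumes "(g has_derivative (\<lambda>h. G \<bullet> h)) (at p)"
  shows "((\<lambda>t. g (p + t *\<^sub>R e)) has_real_derivative (G \<bullet> e)) (at 0)"
proof -
  have 1: "((\<lambda>t. p + t *\<^sub>R e) has_derivative (\<lambda>t. t *\<^sub>R e)) (at 0)"
    by (auto intro!: derivative_eq_intros)
  have 2: "(g has_derivative (\<lambda>h. G \<bullet> h)) (at ((\<lambda>t. p + t *\<^sub>R e) 0))" using assms by simp
  have "((g \<circ> (\<lambda>t. p + t *\<^sub>R e)) has_derivative ((\<lambda>h. G \<bullet> h) \<circ> (\<lambda>t. t *\<^sub>R e))) (at 0)"
    by (rule diff_chain_at[OF 1 2])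
  then have "((\<lambda>t. g (p + t *\<^sub>R e)) has_derivative (\<lambda>t. (G \<bullet> e) * t)) (at 0)"
    by (simp add: o_def mult.commute)
  then show ?thesis
    by (simp add: has_field_derivative_def)
qed

lemma unit_eq:
  fixes \<mu> \<nu> :: "'a::real_inner"
  assumes "norm \<mu> = 1" "norm \<nu> = 1" "\<mu> \<bullet> \<nu> \<ge> 1"
  shows "\<mu> = \<nu>"
proof -
  have "norm (\<mu> - \<nu>)^2 = norm \<mu> ^2 + norm \<nu> ^2 - 2 * (\<mu> \<bullet> \<nu>)"
    by (simp add: power2_norm_eq_inner inner_diff_left inner_diff_right inner_commute)
  also have "\<dots> \<le> 0" using assms by simp
  finally show ?thesis by simp
qed

lemma alg:
  fixes e M N :: "'a::real_inner"
  assumes M1: "norm M = 1" and N1: "norm N = 1" and eN: "e \<bullet> N \<le> - s * norm e"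
    and eM: "e \<bullet> M \<ge> 0" and MN: "M \<bullet> N > \<Theta>" and T0: "0 \<le> \<Theta>" and T1: "\<Theta> < 1"
    and sdef: "s = sqrt (1 - \<Theta>^2)" and e0: "e \<noteq> 0"
  shows False
proof -
  define L where "L = norm e"
  define a where "a = e \<bullet> N"
  define b where "b = M \<bullet> N"
  define c where "c = e \<bullet> M"
  define w where "w = e - a *\<^sub>R N"
  define v where "v = M - b *\<^sub>R N"
  have NN: "N \<bullet> N = 1" using N1 by (simp add: norm_eq_1)
  have MM: "M \<bullet> M = 1" using M1 by (simp add: norm_eq_1)
  have ee: "e \<bullet> e = L^2" by (simp add: L_def power2_norm_eq_inner)
  have wv: "w \<bullet> v = c - a * b"
    by (simp add: w_def v_def a_def b_def c_def inner_diff_left inner_diff_right inner_commute NN algebra_simps)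
  have ww: "w \<bullet> w = L^2 - a^2"
    by (simp add: w_def a_def ee inner_diff_left inner_diff_right inner_commute NN power2_eq_square algebra_simps)
  have vv: "v \<bullet> v = 1 - b^2"
    by (simp add: v_def b_def MM inner_diff_left inner_diff_right inner_commute NN power2_eq_square algebra_simps)
  have cs: "(w \<bullet> v)^2 \<le> (w \<bullet> w) * (v \<bullet> v)"
  proof -
    have "\<bar>w \<bullet> v\<bar> \<le> norm w * norm v" by (rule Cauchy_Schwarz_ineq2)
    then have "\<bar>w \<bullet> v\<bar>^2 \<le> (norm w * norm v)^2" by (intro power_mono) auto
    then show ?thesis by (simp add: power_mult_distrib power2_norm_eq_inner)
  qed
  have T2: "\<Theta>^2 < 1" using T0 T1 by (simp add: abs_square_less_1)
  have s2: "s^2 = 1 - \<Theta>^2" using T2 sdef by simp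
  have s0: "s > 0" using T2 sdef by simp
  have L0: "L > 0" using e0 by (simp add: L_def)
  have aL: "a \<le> - s * L" using eN by (simp add: a_def L_def)
  have b0: "b > \<Theta>" using MN by (simp add: b_def)
  have c0: "c \<ge> 0" using eM by (simp add: c_def)
  have "s * L * b \<le> c - a * b"
  proof -
    have "s * L * b \<le> (- a) * b" using aL b0 T0 by (intro mult_right_mono) auto
    then show ?thesis using c0 by simp
  qed
  moreover have "0 < s * L * b" using s0 L0 b0 T0 by simp
  ultimately have q1: "(s * L * b)^2 \<le> (c - a*b)^2" by (intro power_mono) auto
  have "(s*L)^2 \<le> a^2"
  proof -
    have "s * L \<le> - a" using aL by simp
    then have "(s*L)^2 \<le> (-a)^2" using s0 L0 by (intro power_mono) auto
    then show ?thesis by simp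
  qed
  then have q2: "L^2 - a^2 \<le> \<Theta>^2 * L^2" using s2 by (simp add: power_mult_distrib algebra_simps)
  have vv0: "1 - b^2 \<ge> 0" using vv inner_ge_zero[of v] by simp
  have q3: "(L^2 - a^2) * (1 - b^2) \<le> \<Theta>^2 * L^2 * (1 - b^2)"
    using q2 vv0 by (rule mult_right_mono)
  have "s^2 * L^2 * b^2 \<le> \<Theta>^2 * L^2 * (1 - b^2)"
    using q1 q3 cs wv ww vv by (simp add: power_mult_distrib)
  then have "(1 - \<Theta>^2) * b^2 * L^2 \<le> \<Theta>^2 * (1 - b^2) * L^2" using s2 by (simp add: algebra_simps)
  then have "(1 - \<Theta>^2) * b^2 \<le> \<Theta>^2 * (1 - b^2)" using L0 by simp
  then have "b^2 \<le> \<Theta>^2" by (simp add: algebra_simps)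
  moreover have "\<Theta>^2 < b^2" using b0 T0 by (intro power_strict_mono) auto
  ultimately show False by simp
qed

lemma boundary_facts:
  fixes \<Omega> :: "'a::euclidean_space set"
  assumes cb: "convex_body \<Omega>" and c1: "C1_boundary \<Omega>" and p: "p \<in> frontier \<Omega>"
  shows "norm (outer_normal \<Omega> p) = 1 \<and> (\<forall>Y\<in>\<Omega>. (Y - p) \<bullet> outer_normal \<Omega> p \<le> 0) \<and>
    (\<forall>e. e \<bullet> outer_normal \<Omega> p < 0 \<longrightarrow> (\<exists>\<delta>>0. \<forall>t. 0 < t \<and> t < \<delta> \<longrightarrow> p + t *\<^sub>R e \<in> \<Omega>))"
proof -
  have "\<exists>U g G. open U \<and> p \<in> U \<and>
        (\<forall>x\<in>U. (g has_derivative (\<lambda>h. G x \<bullet> h)) (at x)) \<and>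
        continuous_on U G \<and> G p \<noteq> 0 \<and>
        \<Omega> \<inter> U = {x\<in>U. g x \<le> (0::real)}"
    using c1 p unfolding C1_boundary_def by (rule bspec)
  then obtain U g G where UgG: "open U \<and> p \<in> U \<and>
        (\<forall>x\<in>U. (g has_derivative (\<lambda>h. G x \<bullet> h)) (at x)) \<and>
        continuous_on U G \<and> G p \<noteq> 0 \<and>
        \<Omega> \<inter> U = {x\<in>U. g x \<le> (0::real)}"
    by (elim exE)
  have U: "open U" "p \<in> U" using UgG by simp_all
  have dg: "\<forall>x\<in>U. (g has_derivative (\<lambda>h. G x \<bullet> h)) (at x)" using UgG by simp
  have Gp: "G p \<noteq> 0" using UgG by simp
  have OU: "\<Omega> \<inter> U = {x\<in>U. g x \<le> (0::real)}" using UgG by simp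
  have cl: "closed \<Omega>" using cb unfolding convex_body_def by (simp add: compact_imp_closed)
  have cvx: "convex \<Omega>" using cb unfolding convex_body_def by simp
  have pO: "p \<in> \<Omega>" using p cl by (simp add: frontier_def)
  have dp: "(g has_derivative (\<lambda>h. G p \<bullet> h)) (at p)" using dg U by blast
  have OU2: "x \<in> \<Omega> \<longleftrightarrow> g x \<le> 0" if "x \<in> U" for x
  proof -
    have "x \<in> \<Omega> \<inter> U \<longleftrightarrow> x \<in> {x\<in>U. g x \<le> (0::real)}" by (simp only: OU)
    then show ?thesis using that by simp
  qed
  have gp0: "g p \<le> 0" using pO U OU2 by simp
  obtain e2 where e2: "e2 > 0" "ball p e2 \<subseteq> U" using U open_contains_ball by blast
  have gp: "g p = 0"
  proof (rule ccontr)
    assume "g p \<noteq> 0" then have neg: "g p < 0" using gp0 by simp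
    have "continuous (at p) g" using dp by (rule has_derivative_continuous)
    then obtain e1 where e1: "e1 > 0" "\<forall>y. dist y p < e1 \<longrightarrow> dist (g y) (g p) < - g p"
      using neg unfolding continuous_at_eps_delta by (metis neg_0_less_iff_less)
    have "ball p (min e1 e2) \<subseteq> \<Omega>"
    proof
      fix y assume "y \<in> ball p (min e1 e2)"
      then have "y \<in> U" "dist y p < e1" using e2 by (auto simp: dist_commute)
      then have "g y < 0" using e1 by (auto simp: dist_real_def)
      then show "y \<in> \<Omega>" using \<open>y \<in> U\<close> OU2 by simp
    qed
    then have "ball p (min e1 e2) \<subseteq> interior \<Omega>" by (rule interior_maximal) simp
    moreover have "p \<in> ball p (min e1 e2)" using e1 e2 by simp
    ultimately have "p \<in> interior \<Omega>" by blast
    then show False using p by (simp add: frontier_def)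
  qed
  define \<nu> where "\<nu> = G p /\<^sub>R norm (G p)"
  have nu1: "norm \<nu> = 1" using Gp by (simp add: \<nu>_def)
  have Dir: "\<And>e. ((\<lambda>t. g (p + t *\<^sub>R e)) has_real_derivative (G p \<bullet> e)) (at 0)"
    using dir_deriv[OF dp] .
  have inU: "\<exists>\<delta>>0. \<forall>t. 0 < t \<and> t < \<delta> \<longrightarrow> p + t *\<^sub>R e \<in> U" for e
  proof (intro exI[of _ "e2 / (norm e + 1)"] conjI allI impI)
    show "0 < e2 / (norm e + 1)" using e2 by (simp add: add_nonneg_pos)
    fix t assume t: "0 < t \<and> t < e2 / (norm e + 1)"
    have "norm (t *\<^sub>R e) = t * norm e" using t by simp
    also have "\<dots> \<le> t * (norm e + 1)" using t by simp
    also have "\<dots> < e2" using t by (simp add: pos_less_divide_eq add_nonneg_pos)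
    finally show "p + t *\<^sub>R e \<in> U" using e2 by (auto simp: dist_norm)
  qed
  have GG: "G p \<bullet> G p = norm (G p) ^ 2" by (simp add: power2_norm_eq_inner)
  have nuval: "x \<bullet> \<nu> = (G p \<bullet> x) / norm (G p)" for x
    by (simp add: \<nu>_def inner_commute divide_inverse mult.commute)
  have supp: "\<forall>Y\<in>\<Omega>. (Y - p) \<bullet> \<nu> \<le> 0"
  proof
    fix Y assume Y: "Y \<in> \<Omega>"
    show "(Y - p) \<bullet> \<nu> \<le> 0"
    proof (rule ccontr)
      assume "\<not> ?thesis"
      then have pos: "G p \<bullet> (Y - p) > 0" using Gp by (simp add: nuval not_le zero_less_divide_iff)
      obtain d1 where d1: "d1 > 0" "\<forall>h>0. h < d1 \<longrightarrow> g (p + 0 *\<^sub>R (Y - p)) < g (p + (0 + h) *\<^sub>R (Y - p))"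
        using DERIV_pos_inc_right[OF Dir pos] by blast
      obtain d2 where d2: "d2 > 0" "\<forall>t. 0 < t \<and> t < d2 \<longrightarrow> p + t *\<^sub>R (Y - p) \<in> U" using inU by blast
      define t where "t = min (1/2) (min d1 d2 / 2)"
      have t: "0 < t" "t < d1" "t < d2" "t \<le> 1" using d1 d2 by (auto simp: t_def)
      have "(1 - t) *\<^sub>R p + t *\<^sub>R Y \<in> \<Omega>" using cvx pO Y t unfolding convex_def by simp
      moreover have "(1 - t) *\<^sub>R p + t *\<^sub>R Y = p + t *\<^sub>R (Y - p)" by (simp add: algebra_simps)
      moreover have "p + t *\<^sub>R (Y - p) \<in> U" using d2 t by simp
      ultimately have "g (p + t *\<^sub>R (Y - p)) \<le> 0" using OU2 by simp
      moreover have "g p < g (p + t *\<^sub>R (Y - p))" using d1 t by simp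
      ultimately show False using gp by simp
    qed
  qed
  have inw: "\<exists>\<delta>>0. \<forall>t. 0 < t \<and> t < \<delta> \<longrightarrow> p + t *\<^sub>R e \<in> \<Omega>" if neg: "G p \<bullet> e < 0" for e
  proof -
    obtain d1 where d1: "d1 > 0" "\<forall>h>0. h < d1 \<longrightarrow> g (p + 0 *\<^sub>R e) > g (p + (0 + h) *\<^sub>R e)"
      using DERIV_neg_dec_right[OF Dir neg] by blast
    obtain d2 where d2: "d2 > 0" "\<forall>t. 0 < t \<and> t < d2 \<longrightarrow> p + t *\<^sub>R e \<in> U" using inU by blast
    show ?thesis
    proof (intro exI[of _ "min d1 d2"] conjI allI impI)
      show "0 < min d1 d2" using d1 d2 by simp
      fix t assume t: "0 < t \<and> t < min d1 d2"
      then have "p + t *\<^sub>R e \<in> U" "g (p + t *\<^sub>R e) < 0" using d1 d2 gp by auto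
      then show "p + t *\<^sub>R e \<in> \<Omega>" using OU2 by simp
    qed
  qed
  have uniq: "\<mu> = \<nu>" if H: "norm \<mu> = 1 \<and> (\<forall>Y\<in>\<Omega>. (Y - p) \<bullet> \<mu> \<le> 0)" for \<mu>
  proof -
    have mm: "\<mu> \<bullet> \<mu> = 1" using H by (simp add: norm_eq_1)
    have "\<mu> \<bullet> \<nu> \<ge> 1"
    proof (cases "G p \<bullet> (\<mu> - \<nu>) < 0")
      case True
      then obtain \<delta> where \<delta>: "\<delta> > 0" "\<forall>t. 0 < t \<and> t < \<delta> \<longrightarrow> p + t *\<^sub>R (\<mu> - \<nu>) \<in> \<Omega>"
        using inw by blast
      then have "p + (\<delta>/2) *\<^sub>R (\<mu> - \<nu>) \<in> \<Omega>" by simp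
      then have "((\<delta>/2) *\<^sub>R (\<mu> - \<nu>)) \<bullet> \<mu> \<le> 0" using H by fastforce
      then have "(\<mu> - \<nu>) \<bullet> \<mu> \<le> 0" using \<delta> by (simp add: mult_le_0_iff)
      then show ?thesis using mm by (simp add: inner_diff_left inner_commute[of \<nu> \<mu>])
    next
      case False
      then have "G p \<bullet> \<mu> \<ge> G p \<bullet> \<nu>" by (simp add: inner_diff_right)
      moreover have "G p \<bullet> \<nu> = norm (G p)"
      proof -
        have "G p \<bullet> \<nu> = (G p \<bullet> G p) / norm (G p)" by (rule nuval)
        also have "\<dots> = norm (G p)" using Gp by (simp add: GG power2_eq_square)
        finally show ?thesis .
      qed
      ultimately have ge: "G p \<bullet> \<mu> \<ge> norm (G p)" by simp
      have "\<mu> \<bullet> \<nu> = (G p \<bullet> \<mu>) / norm (G p)" by (rule nuval)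
      also have "\<dots> \<ge> 1" using ge Gp by (simp add: le_divide_eq)
      finally show ?thesis .
    qed
    then show "\<mu> = \<nu>" using unit_eq H nu1 by blast
  qed
  have on: "outer_normal \<Omega> p = \<nu>"
    unfolding outer_normal_def
  proof (rule the_equality)
    show "norm \<nu> = 1 \<and> (\<forall>Y\<in>\<Omega>. (Y - p) \<bullet> \<nu> \<le> 0)" using nu1 supp by (rule conjI)
  next
    fix \<mu> assume "norm \<mu> = 1 \<and> (\<forall>Y\<in>\<Omega>. (Y - p) \<bullet> \<mu> \<le> 0)"
    then show "\<mu> = \<nu>" by (rule uniq)
  qed
  have neg: "G p \<bullet> e < 0" if "e \<bullet> \<nu> < 0" for e
  proof -
    have "e \<bullet> \<nu> = (G p \<bullet> e) / norm (G p)" by (rule nuval)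
    then show ?thesis using that Gp by (simp add: divide_less_0_iff)
  qed
  have third: "\<forall>e. e \<bullet> \<nu> < 0 \<longrightarrow> (\<exists>\<delta>>0. \<forall>t. 0 < t \<and> t < \<delta> \<longrightarrow> p + t *\<^sub>R e \<in> \<Omega>)"
    using neg inw by blast
  show ?thesis unfolding on using nu1 supp third by (intro conjI)
qed


theorem lemma2p8:
  fixes \<Omega> :: "'a::euclidean_space set" and \<Theta> r :: real and X0 :: 'a
  assumes "convex_body \<Omega>" and "C1_boundary \<Omega>"
    and "0 \<le> \<Theta>" and "\<Theta> < 1" and "r > 0"
    and "normal_modulus \<Omega> r < sqrt (2 - 2 * \<Theta>)"
    and "X0 \<in> frontier \<Omega>"
  shows "ball X0 r \<inter> frontier \<Omega> \<subseteq> boundary_plus \<Omega> \<Theta> X0 \<and>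
         {X. (X - X0) \<bullet> (- outer_normal \<Omega> X0) \<ge> sqrt (1 - \<Theta>\<^sup>2) * norm (X - X0)}
            \<inter> ball X0 r \<subseteq> \<Omega>"
proof -
  let ?N = "outer_normal \<Omega>"
  note F = boundary_facts[OF assms(1,2)]
  have bdd: "bdd_above {norm (?N X1 - ?N X2) | X1 X2. X1 \<in> frontier \<Omega> \<and> X2 \<in> frontier \<Omega> \<and> dist X1 X2 < r}"
  proof (rule bdd_aboveI[where M=2])
    fix x assume "x \<in> {norm (?N X1 - ?N X2) | X1 X2. X1 \<in> frontier \<Omega> \<and> X2 \<in> frontier \<Omega> \<and> dist X1 X2 < r}"
    then obtain X1 X2 where x: "x = norm (?N X1 - ?N X2)" "X1 \<in> frontier \<Omega>" "X2 \<in> frontier \<Omega>" by blast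
    have "x \<le> norm (?N X1) + norm (?N X2)" using x norm_triangle_ineq4 by blast
    then show "x \<le> 2" using F[OF x(2)] F[OF x(3)] by simp
  qed
  have P1: "?N X \<bullet> ?N X0 > \<Theta>" if X: "X \<in> ball X0 r" "X \<in> frontier \<Omega>" for X
  proof -
    have dXX: "dist X X0 < r" using X(1) by (simp add: dist_commute)
    have mem: "norm (?N X - ?N X0) \<in> {norm (?N X1 - ?N X2) | X1 X2. X1 \<in> frontier \<Omega> \<and> X2 \<in> frontier \<Omega> \<and> dist X1 X2 < r}"
      using dXX X(2) assms(7) by blast
    have "norm (?N X - ?N X0) \<le> normal_modulus \<Omega> r" unfolding normal_modulus_def
      by (rule cSup_upper[OF mem bdd])
    then have lt: "norm (?N X - ?N X0) < sqrt (2 - 2 * \<Theta>)" using assms(6) by linarith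
    have "norm (?N X - ?N X0)^2 < (sqrt (2 - 2 * \<Theta>))^2"
      using lt by (intro power_strict_mono) auto
    also have "\<dots> = 2 - 2 * \<Theta>" using assms(4) by simp
    finally have "norm (?N X - ?N X0)^2 < 2 - 2 * \<Theta>" .
    moreover have "norm (?N X - ?N X0)^2 = 2 - 2 * (?N X \<bullet> ?N X0)"
      using F[OF X(2)] F[OF assms(7)]
      by (simp add: power2_norm_eq_inner inner_diff_left inner_diff_right inner_commute norm_eq_1)
    ultimately show ?thesis by simp
  qed
  have part1: "ball X0 r \<inter> frontier \<Omega> \<subseteq> boundary_plus \<Omega> \<Theta> X0"
    using P1 unfolding boundary_plus_def by auto
  have cl: "closed \<Omega>" using assms(1) unfolding convex_body_def by (simp add: compact_imp_closed)
  have X0O: "X0 \<in> \<Omega>" using assms(7) cl by (simp add: frontier_def)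
  have part2: "X \<in> \<Omega>" if cone: "(X - X0) \<bullet> (- ?N X0) \<ge> sqrt (1 - \<Theta>\<^sup>2) * norm (X - X0)"
    and Xb: "X \<in> ball X0 r" for X
  proof (rule ccontr)
    assume XnO: "X \<notin> \<Omega>"
    define s where "s = sqrt (1 - \<Theta>\<^sup>2)"
    define e where "e = X - X0"
    have e0: "e \<noteq> 0" using XnO X0O by (auto simp: e_def)
    have T2: "\<Theta>^2 < 1" using assms(3,4) by (simp add: abs_square_less_1)
    have s0: "s > 0" using T2 by (simp add: s_def)
    have eN: "e \<bullet> ?N X0 \<le> - s * norm e" using cone by (simp add: e_def s_def)
    have "s * norm e > 0" using s0 e0 by simp
    then have "e \<bullet> ?N X0 < 0" using eN by linarith
    then obtain \<delta> where \<delta>: "\<delta> > 0" "\<forall>t. 0 < t \<and> t < \<delta> \<longrightarrow> X0 + t *\<^sub>R e \<in> \<Omega>"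
      using F[OF assms(7)] by blast
    define t0 where "t0 = min (\<delta>/2) (1/2)"
    have t0: "0 < t0" "t0 < \<delta>" "t0 < 1" using \<delta> by (auto simp: t0_def)
    define A where "A = X0 + t0 *\<^sub>R e"
    have AO: "A \<in> \<Omega>" using \<delta> t0 by (simp add: A_def)
    have "closed_segment A X \<inter> frontier \<Omega> \<noteq> {}"
      by (rule connected_Int_frontier) (use AO XnO in auto)
    then obtain Y where Y: "Y \<in> closed_segment A X" "Y \<in> frontier \<Omega>" by blast
    then obtain u where u: "0 \<le> u" "u \<le> 1" "Y = (1 - u) *\<^sub>R A + u *\<^sub>R X"
      by (auto simp: closed_segment_def)
    define t where "t = (1 - u) * t0 + u"
    have Yt: "Y = X0 + t *\<^sub>R e"
      by (simp add: u(3) A_def e_def t_def algebra_simps)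
    have tpos: "t > 0"
    proof -
      have nn: "(1 - u) * t0 \<ge> 0" using u t0 by simp
      show ?thesis
      proof (cases "u = 0")
        case True then show ?thesis using t0 by (simp add: t_def)
      next
        case False then have "u > 0" using u by simp
        then show ?thesis using nn unfolding t_def by linarith
      qed
    qed
    have tle: "t \<le> 1"
    proof -
      have "(1 - u) * t0 \<le> (1 - u) * 1" using u t0 by (intro mult_left_mono) auto
      then show ?thesis by (simp add: t_def)
    qed
    have "norm (Y - X0) = t * norm e" using Yt tpos by simp
    also have "\<dots> \<le> norm e" using tle tpos by (intro mult_left_le_one_le) auto
    also have "\<dots> < r" using Xb by (simp add: e_def dist_norm norm_minus_commute)
    finally have Yb: "Y \<in> ball X0 r" by (simp add: dist_norm norm_minus_commute)
    have MN: "?N Y \<bullet> ?N X0 > \<Theta>" using P1[OF Yb Y(2)] .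
    have "(X0 - Y) \<bullet> ?N Y \<le> 0" using F[OF Y(2)] X0O by blast
    then have "- (t * (e \<bullet> ?N Y)) \<le> 0" by (simp add: Yt)
    then have eM: "e \<bullet> ?N Y \<ge> 0" using tpos by (simp add: zero_le_mult_iff)
    have n1: "norm (?N Y) = 1" using F[OF Y(2)] by (rule conjunct1)
    have n2: "norm (?N X0) = 1" using F[OF assms(7)] by (rule conjunct1)
    show False
      by (rule alg[of "?N Y" "?N X0" e s \<Theta>, OF n1 n2 eN eM MN assms(3,4) s_def e0])
  qed
  show ?thesis using part1 part2 by blast
qed

end
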